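(* Let $f:[\frac13,2]\to[\frac13,2]$ be defined by $f(x)=2x$ if $x\in[\frac13,1)$ and $f(x)=\frac{x}{3}$ if $x\in[1,2]$. Then for every $x\in[\frac13,2]$ the orbit $\{f^n(x): n\ge 0\}$ is dense in $[\frac13,2]$. *)

theory Defs
  imports "HOL-Analysis.Analysis"
begin

text \<open>The map f on [1/3,2]: f x = 2x on [1/3,1), f x = x/3 on [1,2].
  Outside [1/3,2] the value is irrelevant (the interval is invariant); we use the identity there.\<close>
definition fmap :: "real \<Rightarrow> real" where
  "fmap x = (if 1/3 \<le> x \<and> x < 1 then 2 * x
             else if 1 \<le> x \<and> x \<le> 2 then x / 3 else x)"

end

theory Submission
  imports Defs
begin

lemma ln6: "ln (6::real) = ln 2 + ln 3"
  using ln_mult[of "2::real" 3] by simp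

lemma fmap_step:
  assumes "y \<in> {1/3..2::real}"
  shows "fmap y \<in> {1/3..2} \<and>
         ln (3 * fmap y) = ln (3*y) + ln 2 - (if y \<ge> 1 then ln 6 else 0)"
proof (cases "y < 1")
  case True
  then have "fmap y = 2*y" using assms by (simp add: fmap_def)
  moreover have "ln (3*(2*y)) = ln (3*y) + ln 2"
  proof -
    have "ln (3*(2*y)) = ln ((3*y)*2)" by (simp add: algebra_simps)
    also have "\<dots> = ln (3*y) + ln 2" using assms by (subst ln_mult) auto
    finally show ?thesis .
  qed
  ultimately show ?thesis using True assms by auto
next
  case False
  then have "fmap y = y/3" using assms by (simp add: fmap_def)
  moreover have "ln (3*(y/3)) = ln (3*y) + ln 2 - ln 6"
  proof -
    show ?thesis using assms by (simp add: ln6 ln_mult)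
  qed
  ultimately have "ln (3 * fmap y) = ln (3*y) + ln 2 - ln 6"
    by (metis times_divide_eq_right nonzero_mult_div_cancel_left zero_neq_numeral)
  moreover have "fmap y \<in> {1/3..2}" using \<open>fmap y = y/3\<close> False assms by auto
  ultimately show ?thesis using False by simp
qed

lemma orbit_form:
  assumes "x \<in> {1/3..2::real}"
  shows "(fmap ^^ n) x \<in> {1/3..2} \<and>
    (\<exists>m::int. ln (3 * (fmap ^^ n) x) = ln (3*x) + real n * ln 2 - of_int m * ln 6)"
proof (induction n)
  case 0
  then show ?case using assms by auto
next
  case (Suc n)
  then obtain m::int where m: "ln (3 * (fmap ^^ n) x) = ln (3*x) + real n * ln 2 - of_int m * ln 6"
    and I: "(fmap ^^ n) x \<in> {1/3..2}" by blast
  define m' where "m' = (if (fmap ^^ n) x \<ge> 1 then m + 1 else m)"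
  have "ln (3 * (fmap ^^ Suc n) x) = ln (3*x) + real (Suc n) * ln 2 - of_int m' * ln 6"
    using fmap_step[OF I] m by (auto simp: m'_def algebra_simps)
  then show ?case using fmap_step[OF I] by auto
qed

lemma not_three_dvd: "\<not> (3::nat) dvd 2^q"
proof -
  have "(2::nat)^q mod 3 \<noteq> 0"
  proof (induction q)
    case 0 then show ?case by simp
  next
    case (Suc q)
    have "(2::nat)^Suc q mod 3 = (2 * ((2::nat)^q mod 3)) mod 3" by (simp add: mod_mult_right_eq)
    moreover have "(2::nat)^q mod 3 < 3" by simp
    then have "(2::nat)^q mod 3 = 1 \<or> (2::nat)^q mod 3 = 2" using Suc.IH by linarith
    ultimately show ?case by auto
  qed
  then show ?thesis by auto
qed

lemma theta_irrat: "ln (2::real) / ln 6 \<notin> \<rat>"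
proof
  assume "ln (2::real) / ln 6 \<in> \<rat>"
  then obtain p q :: int where q: "q > 0" and pq: "ln 2 / ln 6 = (of_int p / of_int q :: real)"
    by (rule Rats_cases')
  have pos: "ln (2::real) / ln 6 > 0" by simp
  have "p > 0"
  proof (rule ccontr)
    assume "\<not> p > 0"
    then have "of_int p / of_int q \<le> (0::real)" using q by (simp add: divide_nonpos_pos)
    then show False using pos pq by simp
  qed
  define K where "K = nat p"
  define Q where "Q = nat q"
  have KQ: "p = int K" "q = int Q" "K > 0" "Q > 0" using \<open>p>0\<close> q by (auto simp: K_def Q_def)
  have "real Q * ln 2 = real K * ln 6" using pq KQ by (simp add: field_simps)
  then have "ln (2 ^ Q) = ln ((6::real) ^ K)" by (simp add: ln_realpow)
  then have "(2::real) ^ Q = 6 ^ K" by simp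
  then have "(2::nat) ^ Q = 6 ^ K" by (metis of_nat_eq_iff of_nat_numeral of_nat_power)
  moreover have "(3::nat) dvd 6 ^ K"
  proof -
    have "(6::nat)^K = 3 * (2 * 6^(K-1))" using KQ by (cases K) auto
    then show ?thesis by (metis dvd_triv_left)
  qed
  ultimately show False using not_three_dvd by metis
qed

lemma approx_interior:
  assumes x: "x \<in> {1/3..2::real}" and t: "t \<in> {1/3<..<2::real}" and e: "e > 0"
  shows "\<exists>n. \<bar>(fmap ^^ n) x - t\<bar> < e"
proof -
  define L where "L = ln (6::real)"
  have L: "L > 0" by (simp add: L_def)
  define \<phi> where "\<phi> y = ln (3*y) / L" for y
  define u where "u = \<phi> t"
  have ln3t: "0 < ln (3*t)" "ln (3*t) < L" using t by (auto simp: L_def)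
  have u: "0 < u" "u < 1" using ln3t L by (auto simp: u_def \<phi>_def)
  define \<delta> where "\<delta> = min (min u (1-u)) (ln (1 + e/2) / L)"
  have dpos: "\<delta> > 0" using u e L by (simp add: \<delta>_def)
  obtain k where k: "k > 0" "\<bar>frac (real k * (ln 2 / ln 6)) - frac (u - \<phi> x)\<bar> < \<delta>"
  proof -
    have "0 \<le> frac (u - \<phi> x)" "frac (u - \<phi> x) \<le> 1"
      using frac_ge_0 frac_lt_1 less_imp_le by blast+
    from Kronecker_approx_1_explicit[OF theta_irrat this dpos] that show thesis by blast
  qed
  obtain m :: int where I: "(fmap ^^ k) x \<in> {1/3..2}"
     and m: "ln (3 * (fmap ^^ k) x) = ln (3*x) + real k * ln 2 - of_int m * ln 6"
    using orbit_form[OF x] by blast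
  define y where "y = (fmap ^^ k) x"
  define d where "d = \<phi> y - u"
  have phiy: "0 \<le> \<phi> y" "\<phi> y \<le> 1" using I L by (auto simp: y_def \<phi>_def L_def)
  have "\<phi> y = \<phi> x + real k * (ln 2 / ln 6) - of_int m"
    using m L by (simp add: \<phi>_def y_def L_def field_simps)
  then have j: "d - (frac (real k * (ln 2 / ln 6)) - frac (u - \<phi> x))
     = of_int (\<lfloor>real k * (ln 2 / ln 6)\<rfloor> - \<lfloor>u - \<phi> x\<rfloor> - m)"
    unfolding d_def frac_def by simp
  define j where "j = \<lfloor>real k * (ln 2 / ln 6)\<rfloor> - \<lfloor>u - \<phi> x\<rfloor> - m"
  have Dlt: "\<bar>frac (real k * (ln 2 / ln 6)) - frac (u - \<phi> x)\<bar> < \<delta>" using k by simp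
  have du: "\<delta> \<le> u" "\<delta> \<le> 1 - u" by (auto simp: \<delta>_def)
  have "\<bar>d\<bar> \<le> 1 - \<delta>" using phiy du by (auto simp: d_def)
  then have "\<bar>real_of_int j\<bar> < 1" using j Dlt unfolding j_def by linarith
  then have "j = 0" by linarith
  then have dd: "\<bar>d\<bar> < \<delta>" using j Dlt unfolding j_def by simp
  have y_eq: "y = exp (L * \<phi> y) / 3" using I L by (simp add: \<phi>_def y_def)
  have t_eq: "t = exp (L * u) / 3" using t L by (simp add: \<phi>_def u_def)
  have ed: "exp (L*d) = exp (L*\<phi> y) / exp (L*u)" by (simp add: d_def right_diff_distrib exp_diff)
  have "t * exp (L*d) = exp (L*u)/3 * (exp (L*\<phi> y)/exp (L*u))"
    by (subst t_eq, subst ed, rule refl)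
  also have "\<dots> = exp (L*\<phi> y)/3" by simp
  finally have yt: "y = t * exp (L * d)" using y_eq by simp
  have "\<delta> \<le> ln (1 + e/2) / L" by (simp add: \<delta>_def)
  then have "\<delta> * L \<le> ln (1 + e/2)" using L by (simp add: pos_le_divide_eq)
  then have Ld: "L * \<delta> \<le> ln (1 + e/2)" by (simp add: mult.commute)
  have eLd: "exp (L*\<delta>) \<le> 1 + e/2"
  proof -
    have "exp (L*\<delta>) \<le> exp (ln (1+e/2))" using Ld by simp
    then show ?thesis using e by simp
  qed
  have dl: "L*d \<le> L*\<delta>" "-(L*\<delta>) \<le> L*d"
    using mult_left_mono[of d \<delta> L] mult_left_mono[of "-\<delta>" d L] dd L by auto
  have up: "exp (L * d) \<le> 1 + e/2"
  proof -
    have "exp (L*d) \<le> exp (L*\<delta>)" using dl by simp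
    also have "\<dots> \<le> exp (ln (1+e/2))" using Ld by simp
    finally show ?thesis using e by simp
  qed
  have lo: "exp (L * d) \<ge> 1 - e/2"
  proof -
    have "exp (-(L*\<delta>)) \<le> exp (L*d)" using dl by simp
    moreover note eLd
    then have "1 - e/2 \<le> exp (-(L*\<delta>))"
    proof -
      assume h: "exp (L*\<delta>) \<le> 1 + e/2"
      have "exp (-(L*\<delta>)) = 1 / exp (L*\<delta>)" by (simp add: exp_minus field_simps)
      moreover have "1 - e/2 \<le> 1 / (1 + e/2)" using e by (simp add: field_simps)
      moreover have "1 / (1 + e/2) \<le> 1 / exp (L*\<delta>)" using h e
        by (simp add: frac_le)
      ultimately show ?thesis by linarith
    qed
    ultimately show ?thesis by linarith
  qed
  have "\<bar>exp (L*d) - 1\<bar> \<le> e/2" using up lo by linarith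
  have "\<bar>y - t\<bar> = \<bar>t * (exp (L*d) - 1)\<bar>" using yt by (simp add: algebra_simps)
  also have "\<dots> = t * \<bar>exp (L*d) - 1\<bar>" using t by (simp add: abs_mult)
  also have "\<dots> \<le> t * (e/2)" using \<open>\<bar>exp (L*d) - 1\<bar> \<le> e/2\<close> t by (simp add: mult_left_mono)
  also have "\<dots> < e" using t e by simp
  finally show ?thesis unfolding y_def by blast
qed

theorem mainTheorem2:
  fixes x :: real
  assumes "x \<in> {1/3..2}"
  shows "{1/3..2} \<subseteq> closure {(fmap ^^ n) x | n. n \<ge> 0}"
proof -
  let ?S = "{(fmap ^^ n) x | n. n \<ge> 0}"
  have "{1/3<..<2} \<subseteq> closure ?S"
  proof
    fix z :: real assume z: "z \<in> {1/3<..<2}"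
    show "z \<in> closure ?S"
      unfolding closure_approachable
    proof (intro allI impI)
      fix e :: real assume "e > 0"
      from approx_interior[OF assms z this] obtain n where "\<bar>(fmap ^^ n) x - z\<bar> < e" by blast
      moreover have "(fmap ^^ n) x \<in> ?S" by blast
      ultimately show "\<exists>y\<in>?S. dist y z < e" unfolding dist_real_def by blast
    qed
  qed
  then have "closure {1/3<..<2} \<subseteq> closure ?S"
    using closure_mono[of "{1/3<..<2::real}" "closure ?S"] by simp
  moreover have "closure {1/3<..<2::real} = {1/3..2}" by (rule closure_greaterThanLessThan) simp
  ultimately show ?thesis by simp
qed

end
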